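(* The set $\mathrm{Rec}(Z^* )$ of recognizable subsets of $Z^*$ is uncountable.
   Context: $Z^*$ is the commutative group of finite sequences of integers whose last entry is non-zero (including the empty sequence), with pointwise addition (shorter sequence padded by zeros) and the empty sequence as unit; equivalently the free abelian group on countably many generators, isomorphic to $(\mathbb{Q}_{>0},\times,1)$. A subset $S$ of a monoid $M$ is recognizable if there exist a finite monoid $N$, a monoid morphism $\varphi\colon M \to N$ and a subset $T \subseteq N$ with $S = \varphi^{-1}(T)$. *)

theory Defs
  imports "HOL-Algebra.Group" "HOL-Library.Countable_Set"
begin

fun padd :: "int list \<Rightarrow> int list \<Rightarrow> int list" where
  "padd [] ys = ys"
| "padd xs [] = xs"
| "padd (x # xs) (y # ys) = (x + y) # padd xs ys"

definition strip :: "int list \<Rightarrow> int list" where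
  "strip xs = rev (dropWhile (\<lambda>x. x = 0) (rev xs))"

definition Zstar :: "int list monoid" where
  "Zstar = \<lparr> carrier = {xs. xs = [] \<or> last xs \<noteq> 0},
             mult = (\<lambda>xs ys. strip (padd xs ys)),
             one = [] \<rparr>"

text \<open>Recognizable subsets of a monoid M. A finite monoid N is represented up to isomorphism
  with carrier a finite set of natural numbers (every finite monoid is isomorphic to such a one).\<close>
definition Rec :: "('a, 'm) monoid_scheme \<Rightarrow> 'a set set" where
  "Rec M = {S. \<exists>(N :: nat monoid) \<phi> T.
              monoid N \<and> finite (carrier N) \<and>
              \<phi> \<in> hom M N \<and> \<phi> \<one>\<^bsub>M\<^esub> = \<one>\<^bsub>N\<^esub> \<and>
              T \<subseteq> carrier N \<and>
              S = {x \<in> carrier M. \<phi> x \<in> T}}"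

end

theory Submission
  imports Defs
begin

fun gg :: "(nat \<Rightarrow> bool) \<Rightarrow> int list \<Rightarrow> int" where
  "gg P [] = 0"
| "gg P (x # xs) = (if P 0 then x else 0) + gg (P \<circ> Suc) xs"

lemma gg_padd: "gg P (padd xs ys) = gg P xs + gg P ys"
  by (induction xs ys arbitrary: P rule: padd.induct) auto

lemma gg_snoc0: "gg P (xs @ [0]) = gg P xs"
  by (induction xs arbitrary: P) auto

lemma gg_strip: "gg P (strip xs) = gg P xs"
proof (induction xs rule: rev_induct)
  case Nil
  then show ?case by (simp add: strip_def)
next
  case (snoc y ys)
  show ?case
  proof (cases "y = 0")
    case True
    then have "strip (ys @ [y]) = strip ys" by (simp add: strip_def)
    then show ?thesis using snoc True gg_snoc0 by simp
  next
    case False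
    then have "strip (ys @ [y]) = ys @ [y]" by (simp add: strip_def)
    then show ?thesis by simp
  qed
qed

lemma gg_unit: "gg P (replicate i 0 @ [1]) = (if P i then 1 else 0)"
  by (induction i arbitrary: P) auto

definition N2 :: "nat monoid" where
  "N2 = \<lparr> carrier = {0, 1}, mult = (\<lambda>a b. (a + b) mod 2), one = 0 \<rparr>"

lemma monoid_N2: "monoid N2"
  unfolding N2_def by (rule monoidI) (auto simp: mod_add_left_eq mod_add_right_eq add.assoc)

definition phi :: "(nat \<Rightarrow> bool) \<Rightarrow> int list \<Rightarrow> nat" where
  "phi P xs = nat (gg P xs mod 2)"

lemma phi_range: "phi P xs \<in> {0, 1}"
proof -
  have "gg P xs mod 2 = 0 \<or> gg P xs mod 2 = 1" by auto
  then show ?thesis unfolding phi_def by auto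
qed

lemma phi_hom: "phi P \<in> hom Zstar N2"
proof (rule homI)
  fix x show "phi P x \<in> carrier N2" using phi_range by (simp add: N2_def)
next
  fix x y
  have "phi P (strip (padd x y)) = (phi P x + phi P y) mod 2"
  proof -
    have a: "gg P x mod 2 = 0 \<or> gg P x mod 2 = 1" "gg P y mod 2 = 0 \<or> gg P y mod 2 = 1" by auto
    have "(gg P x + gg P y) mod 2 = (gg P x mod 2 + gg P y mod 2) mod 2" by (simp add: mod_add_eq)
    then show ?thesis using a unfolding phi_def gg_strip gg_padd by auto
  qed
  then show "phi P (x \<otimes>\<^bsub>Zstar\<^esub> y) = phi P x \<otimes>\<^bsub>N2\<^esub> phi P y"
    by (simp add: Zstar_def N2_def)
qed

definition SP :: "(nat \<Rightarrow> bool) \<Rightarrow> int list set" where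
  "SP P = {x \<in> carrier Zstar. phi P x \<in> {1}}"

lemma SP_Rec: "SP P \<in> Rec Zstar"
  unfolding Rec_def SP_def
  apply (rule CollectI)
  apply (rule exI[of _ N2], rule exI[of _ "phi P"], rule exI[of _ "{1}"])
  using monoid_N2 phi_hom by (auto simp: N2_def Zstar_def phi_def)

lemma unit_carrier: "replicate i 0 @ [1] \<in> carrier Zstar"
  by (simp add: Zstar_def)

lemma SP_inj: "inj SP"
proof (rule injI)
  fix P Q assume eq: "SP P = SP Q"
  show "P = Q"
  proof
    fix i
    have "(replicate i 0 @ [1] \<in> SP P) = P i"
      using unit_carrier[of i] by (simp add: SP_def phi_def gg_unit)
    moreover have "(replicate i 0 @ [1] \<in> SP Q) = Q i"
      using unit_carrier[of i] by (simp add: SP_def phi_def gg_unit)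
    ultimately show "P i = Q i" using eq by simp
  qed
qed

lemma uncountable_predsets: "uncountable (UNIV :: (nat \<Rightarrow> bool) set)"
proof
  assume "countable (UNIV :: (nat \<Rightarrow> bool) set)"
  then obtain g :: "(nat \<Rightarrow> bool) \<Rightarrow> nat" where g: "inj g"
    unfolding countable_def by blast
  define h where "h = inv_into UNIV g"
  define D where "D = (\<lambda>n. \<not> h n n)"
  have "h (g D) = D" using g by (simp add: h_def)
  then have "D (g D) = (\<not> D (g D))" by (metis D_def)
  then show False by simp
qed

theorem mainTheorem14:
  shows "uncountable (Rec Zstar)"
proof
  assume "countable (Rec Zstar)"
  then have "countable (range SP)"
    using SP_Rec by (meson countable_subset image_subsetI)
  then have "countable (UNIV :: (nat \<Rightarrow> bool) set)"
    using SP_inj countable_image_inj_on by blast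
  then show False using uncountable_predsets by blast
qed

end
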